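(* Let $n$ be a positive integer and let $k, c$ be complex numbers. Then \[ \sum_{\pi\in\mathcal{D}(n)} (-1)^{\#(\pi)-1} \sum_{j=1}^{s(\pi)} j^k c^j = \sum_{\substack{\pi\in\mathcal{P}(n)\\ \nu_d(\pi)\ge 2}} \sum_{j=0}^{\nu_d(\pi)-1} (-1)^j \binom{\nu_d(\pi)-1}{j} \bigl(\ell(\pi)-j\bigr)^k c^{\ell(\pi)-j} + \sigma_{k,c}(n), \] where $\sigma_{k,c}(n) = \sum_{d\mid n} d^k c^d$.
   Context: $\mathcal{P}(n)$ is the set of all partitions of $n$ and $\mathcal{D}(n)$ the set of partitions of $n$ into distinct parts. For a partition $\pi$: $s(\pi)$ is its smallest part, $\ell(\pi)$ its largest part, $\#(\pi)$ its number of parts, and $\nu_d(\pi)$ the number of distinct part sizes of $\pi$. For a positive integer $m$ and complex $k$, $m^k=e^{k\log m}$ with the real logarithm. *)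

theory Defs
  imports "HOL-Analysis.Analysis" "HOL-Library.Multiset"
begin

definition partitions :: "nat \<Rightarrow> nat multiset set" where
  "partitions n = {M. (\<forall>x\<in>#M. 0 < x) \<and> sum_mset M = n}"

definition distinct_partitions :: "nat \<Rightarrow> nat multiset set" where
  "distinct_partitions n = {M \<in> partitions n. \<forall>x. count M x \<le> 1}"

definition smallest_part :: "nat multiset \<Rightarrow> nat" where
  "smallest_part M = Min (set_mset M)"

definition largest_part :: "nat multiset \<Rightarrow> nat" where
  "largest_part M = Max (set_mset M)"

definition num_parts :: "nat multiset \<Rightarrow> nat" where
  "num_parts M = size M"

definition num_distinct_parts :: "nat multiset \<Rightarrow> nat" where
  "num_distinct_parts M = card (set_mset M)"

text \<open>m^k for positive integer m and complex k: exp(k log m); complex powr agrees.\<close>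
definition sigma_kc :: "complex \<Rightarrow> complex \<Rightarrow> nat \<Rightarrow> complex" where
  "sigma_kc k c n = (\<Sum>d | d dvd n. (of_nat d) powr k * c ^ d)"

end

theory Submission
  imports Defs
begin


definition colN :: "nat multiset \<Rightarrow> nat \<Rightarrow> nat" where
  "colN \<pi> i = size (filter_mset (\<lambda>x. i \<le> x) \<pi>)"

definition pconj :: "nat multiset \<Rightarrow> nat multiset" where
  "pconj \<pi> = image_mset (colN \<pi>) (mset_set {i. 0 < i \<and> 0 < colN \<pi> i})"

lemma colN_empty[simp]: "colN {#} i = 0" by (simp add: colN_def)

lemma colN_add[simp]: "colN (add_mset x \<pi>) i = colN \<pi> i + (if i \<le> x then 1 else 0)"
  by (simp add: colN_def)

lemma colN_pos_iff: "0 < colN \<pi> i \<longleftrightarrow> (\<exists>x\<in>#\<pi>. i \<le> x)"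
  by (induction \<pi>) auto

lemma colN_Suc: "colN \<pi> x = colN \<pi> (Suc x) + count \<pi> x"
  by (induction \<pi>) auto

lemma colN_antimono: "i \<le> i' \<Longrightarrow> colN \<pi> i' \<le> colN \<pi> i"
  by (induction \<pi>) auto

lemma le_sum_mset_nat: "x \<in># (\<pi>::nat multiset) \<Longrightarrow> x \<le> sum_mset \<pi>"
  by (induction \<pi>) auto

lemma finite_I: "finite {i. 0 < i \<and> 0 < colN \<pi> i}"
proof -
  have "{i. 0 < i \<and> 0 < colN \<pi> i} \<subseteq> {..sum_mset \<pi>}"
    using le_sum_mset_nat by (auto simp: colN_pos_iff) (meson le_trans)
  then show ?thesis using finite_subset by blast
qed

lemma colN_eq_imp_eq:
  assumes "\<forall>x\<in>#\<pi>. 0 < x" "\<forall>x\<in>#\<sigma>. 0 < x" "\<And>i. 0 < i \<Longrightarrow> colN \<pi> i = colN \<sigma> i"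
  shows "\<pi> = \<sigma>"
proof (rule multiset_eqI)
  fix x
  show "count \<pi> x = count \<sigma> x"
  proof (cases "x = 0")
    case True
    then show ?thesis using assms(1,2) by (metis count_eq_zero_iff less_irrefl)
  next
    case False
    then have "colN \<pi> x = colN \<sigma> x" "colN \<pi> (Suc x) = colN \<sigma> (Suc x)" using assms(3) by auto
    then show ?thesis using colN_Suc[of \<pi> x] colN_Suc[of \<sigma> x] by simp
  qed
qed

lemma colN_pconj: "0 < j \<Longrightarrow> colN (pconj \<pi>) j = card {i. 0 < i \<and> j \<le> colN \<pi> i}"
proof -
  assume j: "0 < j"
  have "colN (pconj \<pi>) j = size (filter_mset (\<lambda>x. j \<le> x) (image_mset (colN \<pi>) (mset_set {i. 0 < i \<and> 0 < colN \<pi> i})))"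
    by (simp add: colN_def pconj_def)
  also have "\<dots> = size (filter_mset (\<lambda>i. j \<le> colN \<pi> i) (mset_set {i. 0 < i \<and> 0 < colN \<pi> i}))"
    by (simp add: filter_mset_image_mset)
  also have "\<dots> = card {i \<in> {i. 0 < i \<and> 0 < colN \<pi> i}. j \<le> colN \<pi> i}"
    using finite_I by simp
  also have "{i \<in> {i. 0 < i \<and> 0 < colN \<pi> i}. j \<le> colN \<pi> i} = {i. 0 < i \<and> j \<le> colN \<pi> i}"
    using j by auto
  finally show ?thesis .
qed

lemma down_closed_card:
  assumes "finite A" "\<And>a b. a \<in> A \<Longrightarrow> 0 < b \<Longrightarrow> b \<le> a \<Longrightarrow> b \<in> A" "\<And>a. a \<in> A \<Longrightarrow> 0 < a" "0 < (j::nat)"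
  shows "j \<le> card A \<longleftrightarrow> j \<in> A"
proof
  assume "j \<in> A"
  have "{1..j} \<subseteq> A"
  proof
    fix b assume "b \<in> {1..j}"
    then show "b \<in> A" using assms(2)[OF \<open>j \<in> A\<close>, of b] by simp
  qed
  from card_mono[OF assms(1) this] show "j \<le> card A" by simp
next
  assume "j \<le> card A"
  show "j \<in> A"
  proof (rule ccontr)
    assume "j \<notin> A"
    have "A \<subseteq> {1..<j}"
    proof
      fix a assume a: "a \<in> A"
      have "\<not> j \<le> a" using assms(2)[OF a assms(4)] \<open>j \<notin> A\<close> by blast
      then show "a \<in> {1..<j}" using assms(3)[OF a] by auto
    qed
    from card_mono[OF _ this] have "card A \<le> j - 1" by simp
    then show False using \<open>j \<le> card A\<close> assms(4) by linarith
  qed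
qed

lemma pconj_le_iff:
  assumes "0 < i" "0 < j"
  shows "i \<le> colN (pconj \<pi>) j \<longleftrightarrow> j \<le> colN \<pi> i"
proof -
  have fin: "finite {i. 0 < i \<and> j \<le> colN \<pi> i}"
    by (rule finite_subset[OF _ finite_I[of \<pi>]]) (use assms in auto)
  have "i \<le> card {i. 0 < i \<and> j \<le> colN \<pi> i} \<longleftrightarrow> i \<in> {i. 0 < i \<and> j \<le> colN \<pi> i}"
  proof (rule down_closed_card[OF fin])
    fix a b assume "a \<in> {i. 0 < i \<and> j \<le> colN \<pi> i}" "0 < b" "b \<le> a"
    then show "b \<in> {i. 0 < i \<and> j \<le> colN \<pi> i}" using colN_antimono[of b a \<pi>] by auto
  next
    show "0 < i" by fact
  qed simp
  then show ?thesis using assms by (simp add: colN_pconj)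
qed

lemma pconj_pos: "x \<in># pconj \<pi> \<Longrightarrow> 0 < x"
  using finite_I by (auto simp: pconj_def)

lemma pconj_pconj:
  assumes "\<forall>x\<in>#\<pi>. 0 < x"
  shows "pconj (pconj \<pi>) = \<pi>"
proof (rule colN_eq_imp_eq)
  show "\<forall>x\<in>#pconj (pconj \<pi>). 0 < x" using pconj_pos by blast
  show "\<forall>x\<in>#\<pi>. 0 < x" by fact
  fix i :: nat assume i: "0 < i"
  have "colN (pconj (pconj \<pi>)) i = card {j. 0 < j \<and> i \<le> colN (pconj \<pi>) j}"
    using i by (rule colN_pconj)
  also have "{j. 0 < j \<and> i \<le> colN (pconj \<pi>) j} = {1..colN \<pi> i}"
    using pconj_le_iff[OF i] by auto
  finally show "colN (pconj (pconj \<pi>)) i = colN \<pi> i" by simp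
qed

lemma sum_colN: "(\<forall>x\<in>#\<pi>. x \<le> B) \<Longrightarrow> (\<Sum>i=1..B. colN \<pi> i) = sum_mset \<pi>"
proof (induction \<pi>)
  case empty then show ?case by simp
next
  case (add x \<pi>)
  then have "(\<Sum>i=1..B. colN (add_mset x \<pi>) i) = (\<Sum>i=1..B. colN \<pi> i) + (\<Sum>i=1..B. if i \<le> x then 1 else 0)"
    by (simp add: sum.distrib)
  moreover have "{1..B} \<inter> {i. i \<le> x} = {1..x}" using add.prems by auto
  then have "(\<Sum>i=1..B. if i \<le> x then 1 else (0::nat)) = x"
    by (simp add: sum.If_cases)
  ultimately show ?case using add by simp
qed

lemma sum_pconj: "sum_mset (pconj \<pi>) = sum_mset \<pi>"
proof -
  let ?I = "{i. 0 < i \<and> 0 < colN \<pi> i}"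
  have "sum_mset (pconj \<pi>) = (\<Sum>i\<in>?I. colN \<pi> i)"
    by (simp add: pconj_def sum_unfold_sum_mset)
  also have "\<dots> = (\<Sum>i=1..sum_mset \<pi>. colN \<pi> i)"
  proof (rule sum.mono_neutral_left)
    show "?I \<subseteq> {1..sum_mset \<pi>}"
      using le_sum_mset_nat by (auto simp: colN_pos_iff) (meson le_trans)
  qed auto
  also have "\<dots> = sum_mset \<pi>" by (rule sum_colN) (simp add: le_sum_mset_nat)
  finally show ?thesis .
qed

lemma I_eq: "\<pi> \<noteq> {#} \<Longrightarrow> {i. 0 < i \<and> 0 < colN \<pi> i} = {1..Max (set_mset \<pi>)}"
proof -
  assume ne: "\<pi> \<noteq> {#}"
  have "(\<exists>x\<in>#\<pi>. i \<le> x) \<longleftrightarrow> i \<le> Max (set_mset \<pi>)" for i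
  proof
    assume "\<exists>x\<in>#\<pi>. i \<le> x"
    then obtain x where "x \<in># \<pi>" "i \<le> x" by blast
    then show "i \<le> Max (set_mset \<pi>)" by (meson Max_ge finite_set_mset le_trans)
  next
    assume "i \<le> Max (set_mset \<pi>)"
    moreover have "Max (set_mset \<pi>) \<in># \<pi>" using ne by (intro Max_in) auto
    ultimately show "\<exists>x\<in>#\<pi>. i \<le> x" by blast
  qed
  then show ?thesis by (auto simp: colN_pos_iff)
qed

lemma size_pconj: "\<pi> \<noteq> {#} \<Longrightarrow> size (pconj \<pi>) = Max (set_mset \<pi>)"
  using finite_I[of \<pi>] by (simp add: pconj_def I_eq)

lemma colN_1: "\<forall>x\<in>#\<pi>. 0 < x \<Longrightarrow> colN \<pi> 1 = size \<pi>"
  by (induction \<pi>) auto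

lemma set_pconj: "set_mset (pconj \<pi>) = colN \<pi> ` {i. 0 < i \<and> 0 < colN \<pi> i}"
  using finite_I[of \<pi>] by (simp add: pconj_def)

lemma Max_pconj:
  assumes "\<forall>x\<in>#\<pi>. 0 < x" "\<pi> \<noteq> {#}"
  shows "Max (set_mset (pconj \<pi>)) = size \<pi>"
proof -
  have "0 < size \<pi>" using assms(2) by (cases \<pi>) auto
  then have "1 \<in> {i. 0 < i \<and> 0 < colN \<pi> i}" using colN_1[OF assms(1)] by simp
  then have mem: "colN \<pi> 1 \<in> set_mset (pconj \<pi>)" by (simp add: set_pconj)
  have "\<forall>y \<in> set_mset (pconj \<pi>). y \<le> colN \<pi> 1"
    by (auto simp: set_pconj intro: colN_antimono)
  then have "Max (set_mset (pconj \<pi>)) = colN \<pi> 1"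
    using mem by (intro Max_eqI) auto
  then show ?thesis using colN_1 assms by simp
qed

lemma card_set_pconj:
  assumes "\<forall>x\<in>#\<pi>. 0 < x"
  shows "card (set_mset (pconj \<pi>)) = card (set_mset \<pi>)"
proof -
  have eq: "colN \<pi> ` {i. 0 < i \<and> 0 < colN \<pi> i} = colN \<pi> ` set_mset \<pi>"
  proof
    show "colN \<pi> ` set_mset \<pi> \<subseteq> colN \<pi> ` {i. 0 < i \<and> 0 < colN \<pi> i}"
      using assms by (auto simp: colN_pos_iff)
    show "colN \<pi> ` {i. 0 < i \<and> 0 < colN \<pi> i} \<subseteq> colN \<pi> ` set_mset \<pi>"
    proof
      fix y assume "y \<in> colN \<pi> ` {i. 0 < i \<and> 0 < colN \<pi> i}"
      then obtain i where i: "0 < i" "0 < colN \<pi> i" "y = colN \<pi> i" by auto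
      let ?S = "{x \<in> set_mset \<pi>. i \<le> x}"
      have ne: "?S \<noteq> {}" using i colN_pos_iff by auto
      define x where "x = Min ?S"
      have x: "x \<in> set_mset \<pi>" "i \<le> x" using Min_in[OF _ ne] by (auto simp: x_def)
      have "colN \<pi> i = colN \<pi> x"
        unfolding colN_def
      proof (rule arg_cong[where f = size], rule filter_mset_cong)
        fix z assume "z \<in># \<pi>"
        show "(i \<le> z) = (x \<le> z)"
          using x \<open>z \<in># \<pi>\<close> Min_le[of ?S z] by (auto simp: x_def)
      qed simp
      then show "y \<in> colN \<pi> ` set_mset \<pi>" using i x by auto
    qed
  qed
  have inj: "inj_on (colN \<pi>) (set_mset \<pi>)"
  proof (rule inj_onI)
    have strict: "colN \<pi> y < colN \<pi> x" if "x \<in># \<pi>" "y \<in># \<pi>" "x < y" for x y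
    proof -
      have "colN \<pi> x = colN \<pi> (Suc x) + count \<pi> x" by (rule colN_Suc)
      moreover have "colN \<pi> y \<le> colN \<pi> (Suc x)" using that by (intro colN_antimono) auto
      moreover have "0 < count \<pi> x" using that by auto
      ultimately show ?thesis by linarith
    qed
    fix x y assume "x \<in> set_mset \<pi>" "y \<in> set_mset \<pi>" "colN \<pi> x = colN \<pi> y"
    then show "x = y" using strict by (metis less_irrefl linorder_neqE_nat)
  qed
  show ?thesis by (simp add: set_pconj eq card_image[OF inj])
qed



lemma size_le_sum_mset_nat: "(\<forall>x\<in>#\<pi>. 0 < (x::nat)) \<Longrightarrow> size \<pi> \<le> sum_mset \<pi>"
  by (induction \<pi>) auto

lemma finite_msets_bounded:
  assumes "finite A"
  shows "finite {\<gamma>. set_mset \<gamma> \<subseteq> A \<and> size \<gamma> \<le> k}"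
proof -
  have "{\<gamma>. set_mset \<gamma> \<subseteq> A \<and> size \<gamma> \<le> k} = (\<Union>s\<in>{..k}. multisets_of_size A s)"
    by (auto simp: multisets_of_size_def)
  then show ?thesis using assms by auto
qed

lemma partitions_sub: "partitions n \<subseteq> {\<gamma>. set_mset \<gamma> \<subseteq> {1..n} \<and> size \<gamma> \<le> n}"
proof
  fix \<pi> assume "\<pi> \<in> partitions n"
  then have p: "\<forall>x\<in>#\<pi>. 0 < x" "sum_mset \<pi> = n" by (auto simp: partitions_def)
  have "set_mset \<pi> \<subseteq> {1..n}" using p le_sum_mset_nat by (auto simp: Suc_le_eq)
  moreover have "size \<pi> \<le> n" using size_le_sum_mset_nat[OF p(1)] p(2) by simp
  ultimately show "\<pi> \<in> {\<gamma>. set_mset \<gamma> \<subseteq> {1..n} \<and> size \<gamma> \<le> n}" by simp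
qed

lemma finite_partitions: "finite (partitions n)"
  using finite_subset[OF partitions_sub finite_msets_bounded] by blast

lemma partitions_pos: "\<pi> \<in> partitions n \<Longrightarrow> x \<in># \<pi> \<Longrightarrow> 0 < x"
  by (auto simp: partitions_def)

lemma partitions_ne: "0 < n \<Longrightarrow> \<pi> \<in> partitions n \<Longrightarrow> \<pi> \<noteq> {#}"
  by (auto simp: partitions_def)

lemma pconj_in: "\<pi> \<in> partitions n \<Longrightarrow> pconj \<pi> \<in> partitions n"
  unfolding partitions_def using sum_pconj[of \<pi>] pconj_pos[of _ \<pi>] by auto

lemma pconj_bij: "bij_betw pconj (partitions n) (partitions n)"
proof (rule bij_betw_byWitness[where f' = pconj])
  show "\<forall>a\<in>partitions n. pconj (pconj a) = a"
    by (simp add: pconj_pconj partitions_def)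
  then show "\<forall>a\<in>partitions n. pconj (pconj a) = a" .
  show "pconj ` partitions n \<subseteq> partitions n" using pconj_in by blast
  then show "pconj ` partitions n \<subseteq> partitions n" .
qed

lemma sum_pconj_reindex: "sum h (partitions n) = sum (\<lambda>\<pi>. h (pconj \<pi>)) (partitions n)"
  using sum.reindex_bij_betw[OF pconj_bij, of h n] by simp

definition sb :: "nat \<Rightarrow> nat \<Rightarrow> int" where
  "sb n m = (\<Sum>\<pi>\<in>partitions n. if m \<le> largest_part \<pi> then
      (-1) ^ (largest_part \<pi> - m) * int (num_distinct_parts \<pi> choose (largest_part \<pi> - m)) else 0)"

lemma b1:
  assumes "0 < n"
  shows "sb n m = (\<Sum>p\<in>partitions n. if m \<le> size p then
      (-1) ^ (size p - m) * int (card (set_mset p) choose (size p - m)) else 0)"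
  unfolding sb_def
  apply (subst sum_pconj_reindex)
  apply (rule sum.cong[OF refl])
  subgoal for p
    using Max_pconj[of p] card_set_pconj[of p] partitions_ne[OF assms, of p]
    by (auto simp: largest_part_def num_distinct_parts_def partitions_def)
  done

definition Q1 :: "nat \<Rightarrow> nat \<Rightarrow> (nat multiset \<times> nat set) set" where
  "Q1 n m = {(p,U). p \<in> partitions n \<and> m \<le> size p \<and> U \<subseteq> set_mset p \<and> card U = size p - m}"

lemma b2:
  "(\<Sum>p\<in>partitions n. if m \<le> size p then
      (-1) ^ (size p - m) * int (card (set_mset p) choose (size p - m)) else 0)
   = (\<Sum>(p,U)\<in>Q1 n m. (-1::int) ^ card U)"
proof -
  have "(\<Sum>p\<in>partitions n. if m \<le> size p then
      (-1) ^ (size p - m) * int (card (set_mset p) choose (size p - m)) else 0)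
      = (\<Sum>p\<in>partitions n. \<Sum>U\<in>{U. U \<subseteq> set_mset p \<and> card U = size p - m}.
            if m \<le> size p then (-1::int) ^ card U else 0)"
  proof (rule sum.cong[OF refl])
    fix p
    have "(\<Sum>U\<in>{U. U \<subseteq> set_mset p \<and> card U = size p - m}. if m \<le> size p then (-1::int) ^ card U else 0)
        = (\<Sum>U\<in>{U. U \<subseteq> set_mset p \<and> card U = size p - m}. if m \<le> size p then (-1::int) ^ (size p - m) else 0)"
      by (rule sum.cong) auto
    also have "\<dots> = (if m \<le> size p then (-1) ^ (size p - m) * int (card (set_mset p) choose (size p - m)) else 0)"
      by (simp add: n_subsets)
    finally show "(if m \<le> size p then (-1) ^ (size p - m) * int (card (set_mset p) choose (size p - m)) else 0)
      = (\<Sum>U\<in>{U. U \<subseteq> set_mset p \<and> card U = size p - m}. if m \<le> size p then (-1::int) ^ card U else 0)"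
      by simp
  qed
  also have "\<dots> = (\<Sum>(p,U)\<in>(SIGMA p:partitions n. {U. U \<subseteq> set_mset p \<and> card U = size p - m}).
            if m \<le> size p then (-1::int) ^ card U else 0)"
    by (rule sum.Sigma) (auto simp: finite_partitions)
  also have "\<dots> = (\<Sum>x\<in>(SIGMA p:partitions n. {U. U \<subseteq> set_mset p \<and> card U = size p - m}).
            if m \<le> size (fst x) then (-1::int) ^ card (snd x) else 0)"
    by (rule sum.cong) auto
  also have "\<dots> = (\<Sum>x\<in>{x\<in>(SIGMA p:partitions n. {U. U \<subseteq> set_mset p \<and> card U = size p - m}). m \<le> size (fst x)}.
             (-1::int) ^ card (snd x))"
    by (rule sum.inter_filter[symmetric])
       (auto intro!: finite_SigmaI simp: finite_partitions)
  also have "{x\<in>(SIGMA p:partitions n. {U. U \<subseteq> set_mset p \<and> card U = size p - m}). m \<le> size (fst x)} = Q1 n m"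
    by (auto simp: Q1_def)
  finally show ?thesis by (simp add: case_prod_beta)
qed

lemma sum_mset_mset_set_nat: "finite U \<Longrightarrow> sum_mset (mset_set U) = (\<Sum>U :: nat)"
  by (induction rule: finite_induct) auto

lemma mset_set_subseteq: "U \<subseteq> set_mset p \<Longrightarrow> mset_set U \<subseteq># p"
proof -
  assume U: "U \<subseteq> set_mset p"
  have fin: "finite U" using U finite_subset by blast
  show ?thesis
  proof (rule mset_subset_eqI)
    fix x show "count (mset_set U) x \<le> count p x"
      using U fin by (cases "x \<in> U") auto
  qed
qed

definition Q2 :: "nat \<Rightarrow> nat \<Rightarrow> (nat set \<times> nat multiset) set" where
  "Q2 n m = {(U,\<beta>). U \<subseteq> {1..n} \<and> \<Sum>U \<le> n \<and> \<beta> \<in> partitions (n - \<Sum>U) \<and> size \<beta> = m}"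

lemma b3: "(\<Sum>(p,U)\<in>Q1 n m. (-1::int) ^ card U) = (\<Sum>(U,\<beta>)\<in>Q2 n m. (-1::int) ^ card U)"
proof (rule sum.reindex_bij_witness[where j = "\<lambda>(p,U). (U, p - mset_set U)" and i = "\<lambda>(U,\<beta>). (\<beta> + mset_set U, U)"])
  fix a assume a: "a \<in> Q1 n m"
  then obtain p U where pU: "a = (p,U)" "p \<in> partitions n" "m \<le> size p" "U \<subseteq> set_mset p" "card U = size p - m"
    by (auto simp: Q1_def)
  have sub: "mset_set U \<subseteq># p" using pU(4) by (rule mset_set_subseteq)
  have fin: "finite U" using pU(4) finite_subset by blast
  have dec: "p = (p - mset_set U) + mset_set U" using sub by (simp add: subset_mset.diff_add)
  show "(\<lambda>(U,\<beta>). (\<beta> + mset_set U, U)) ((\<lambda>(p,U). (U, p - mset_set U)) a) = a"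
    using pU(1) dec by simp
  have Usub: "U \<subseteq> {1..n}"
  proof
    fix x assume "x \<in> U"
    then have "x \<in># p" using pU(4) by blast
    then have "0 < x" "x \<le> sum_mset p" using partitions_pos[OF pU(2)] le_sum_mset_nat by auto
    then show "x \<in> {1..n}" using pU(2) by (simp add: partitions_def)
  qed
  have sU: "\<Sum>U = sum_mset (mset_set U)" using fin by (simp add: sum_mset_mset_set_nat)
  have sp: "sum_mset p = n" using pU(2) by (simp add: partitions_def)
  have "sum_mset p = sum_mset (p - mset_set U) + \<Sum>U"
    using sU dec by (metis sum_mset.union)
  then have le: "\<Sum>U \<le> n" and sd: "sum_mset (p - mset_set U) = n - \<Sum>U" using sp by linarith+
  have "\<forall>x\<in>#p - mset_set U. 0 < x"
    using partitions_pos[OF pU(2)] by (meson in_diffD)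
  then have "p - mset_set U \<in> partitions (n - \<Sum>U)"
    using sd by (simp add: partitions_def)
  moreover have "size p = size (p - mset_set U) + card U"
    using dec by (metis size_mset_set size_union)
  then have "size (p - mset_set U) = m"
    using pU(3,5) by linarith
  ultimately show "(\<lambda>(p,U). (U, p - mset_set U)) a \<in> Q2 n m"
    using pU(1) Usub le by (simp add: Q2_def)
next
  fix b assume b: "b \<in> Q2 n m"
  then obtain U \<beta> where Ub: "b = (U,\<beta>)" "U \<subseteq> {1..n}" "\<Sum>U \<le> n" "\<beta> \<in> partitions (n - \<Sum>U)" "size \<beta> = m"
    by (auto simp: Q2_def)
  have fin: "finite U" using Ub(2) finite_subset by blast
  show "(\<lambda>(p,U). (U, p - mset_set U)) ((\<lambda>(U,\<beta>). (\<beta> + mset_set U, U)) b) = b"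
    using Ub by simp
  have "\<beta> + mset_set U \<in> partitions n"
    using Ub fin by (auto simp: partitions_def sum_mset_mset_set_nat)
  moreover have "size (\<beta> + mset_set U) = m + card U" using Ub fin by simp
  ultimately show "(\<lambda>(U,\<beta>). (\<beta> + mset_set U, U)) b \<in> Q1 n m"
    using Ub fin by (auto simp: Q1_def)
next
  fix a assume "a \<in> Q1 n m"
  then show "(case (\<lambda>(p,U). (U, p - mset_set U)) a of (U, \<beta>) \<Rightarrow> (-1::int) ^ card U) = (case a of (p, U) \<Rightarrow> (-1) ^ card U)"
    by (auto simp: case_prod_beta)
qed

definition W :: "nat \<Rightarrow> nat set set" where
  "W n = {U. U \<subseteq> {1..n} \<and> \<Sum>U \<le> n}"

lemma finite_W: "finite (W n)"
  unfolding W_def by (rule finite_subset[of _ "Pow {1..n}"]) auto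

lemma b4: "(\<Sum>(U,\<beta>)\<in>Q2 n m. (-1::int) ^ card U)
   = (\<Sum>U\<in>W n. (-1) ^ card U * int (card {\<beta>\<in>partitions (n - \<Sum>U). size \<beta> = m}))"
proof -
  have "(\<Sum>U\<in>W n. (-1) ^ card U * int (card {\<beta>\<in>partitions (n - \<Sum>U). size \<beta> = m}))
      = (\<Sum>U\<in>W n. \<Sum>\<beta>\<in>{\<beta>\<in>partitions (n - \<Sum>U). size \<beta> = m}. (-1::int) ^ card U)"
    by (simp add: mult.commute)
  also have "\<dots> = (\<Sum>(U,\<beta>)\<in>(SIGMA U:W n. {\<beta>\<in>partitions (n - \<Sum>U). size \<beta> = m}). (-1::int) ^ card U)"
    by (rule sum.Sigma) (auto simp: finite_W finite_partitions)
  also have "(SIGMA U:W n. {\<beta>\<in>partitions (n - \<Sum>U). size \<beta> = m}) = Q2 n m"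
    by (auto simp: Q2_def W_def)
  finally show ?thesis by simp
qed

lemma b5:
  assumes "0 < m"
  shows "card {\<beta>\<in>partitions k. size \<beta> = m} = card {\<alpha>\<in>partitions k. m \<in># \<alpha> \<and> (\<forall>x\<in>#\<alpha>. x \<le> m)}"
proof (rule bij_betw_same_card[of pconj], rule bij_betw_byWitness[where f' = pconj])
  show "\<forall>a\<in>{\<beta> \<in> partitions k. size \<beta> = m}. pconj (pconj a) = a"
    by (auto simp: pconj_pconj partitions_def)
  show "\<forall>a\<in>{\<alpha>\<in>partitions k. m \<in># \<alpha> \<and> (\<forall>x\<in>#\<alpha>. x \<le> m)}. pconj (pconj a) = a"
    by (auto simp: pconj_pconj partitions_def)
  show "pconj ` {\<beta> \<in> partitions k. size \<beta> = m} \<subseteq> {\<alpha>\<in>partitions k. m \<in># \<alpha> \<and> (\<forall>x\<in>#\<alpha>. x \<le> m)}"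
  proof
    fix \<alpha> assume "\<alpha> \<in> pconj ` {\<beta> \<in> partitions k. size \<beta> = m}"
    then obtain \<beta> where \<beta>: "\<beta> \<in> partitions k" "size \<beta> = m" "\<alpha> = pconj \<beta>" by auto
    have ne: "\<beta> \<noteq> {#}" using \<beta> assms by auto
    have pos: "\<forall>x\<in>#\<beta>. 0 < x" using \<beta> by (auto simp: partitions_def)
    have M: "Max (set_mset \<alpha>) = m" using Max_pconj[OF pos ne] \<beta> by simp
    have "size \<alpha> = Max (set_mset \<beta>)" using size_pconj[OF ne] \<beta> by simp
    moreover have "0 < Max (set_mset \<beta>)" using ne pos by (metis Max_in finite_set_mset set_mset_eq_empty_iff)
    ultimately have ane: "\<alpha> \<noteq> {#}" by auto
    have "m \<in># \<alpha>" using M ane by (metis Max_in finite_set_mset set_mset_eq_empty_iff)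
    moreover have "\<forall>x\<in>#\<alpha>. x \<le> m" using M by auto
    ultimately show "\<alpha> \<in> {\<alpha>\<in>partitions k. m \<in># \<alpha> \<and> (\<forall>x\<in>#\<alpha>. x \<le> m)}"
      using \<beta> pconj_in by auto
  qed
  show "pconj ` {\<alpha>\<in>partitions k. m \<in># \<alpha> \<and> (\<forall>x\<in>#\<alpha>. x \<le> m)} \<subseteq> {\<beta> \<in> partitions k. size \<beta> = m}"
  proof
    fix \<beta> assume "\<beta> \<in> pconj ` {\<alpha>\<in>partitions k. m \<in># \<alpha> \<and> (\<forall>x\<in>#\<alpha>. x \<le> m)}"
    then obtain \<alpha> where \<alpha>: "\<alpha> \<in> partitions k" "m \<in># \<alpha>" "\<forall>x\<in>#\<alpha>. x \<le> m" "\<beta> = pconj \<alpha>" by auto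
    have ne: "\<alpha> \<noteq> {#}" using \<alpha> by auto
    have "Max (set_mset \<alpha>) = m" using \<alpha> by (intro Max_eqI) auto
    then show "\<beta> \<in> {\<beta> \<in> partitions k. size \<beta> = m}" using size_pconj[OF ne] \<alpha> pconj_in by auto
  qed
qed



definition G :: "nat \<Rightarrow> nat \<Rightarrow> nat set \<Rightarrow> nat multiset set" where
  "G n m U = {\<gamma>. (\<forall>x\<in>#\<gamma>. 0 < x \<and> x \<le> m) \<and> sum_mset \<gamma> + m = n - \<Sum>U}"

lemma finite_G: "finite (G n m U)"
proof (rule finite_subset[OF _ finite_msets_bounded[of "{1..m}" n]])
  show "G n m U \<subseteq> {\<gamma>. set_mset \<gamma> \<subseteq> {1..m} \<and> size \<gamma> \<le> n}"
  proof
    fix \<gamma> assume g: "\<gamma> \<in> G n m U"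
    then have pos: "\<forall>x\<in>#\<gamma>. 0 < x" by (auto simp: G_def)
    have "size \<gamma> \<le> sum_mset \<gamma>" by (rule size_le_sum_mset_nat[OF pos])
    also have "\<dots> \<le> n" using g by (auto simp: G_def)
    finally show "\<gamma> \<in> {\<gamma>. set_mset \<gamma> \<subseteq> {1..m} \<and> size \<gamma> \<le> n}"
      using g by (auto simp: G_def Suc_le_eq)
  qed
qed simp

lemma card_G:
  "card {\<alpha>\<in>partitions k. m \<in># \<alpha> \<and> (\<forall>x\<in>#\<alpha>. x \<le> m)} = card {\<gamma>. (\<forall>x\<in>#\<gamma>. 0 < x \<and> x \<le> m) \<and> sum_mset \<gamma> + m = k}"
  if "0 < m"
proof (rule bij_betw_same_card[of "\<lambda>\<alpha>. \<alpha> - {#m#}"], rule bij_betw_byWitness[where f' = "add_mset m"])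
  show "\<forall>a\<in>{\<alpha>\<in>partitions k. m \<in># \<alpha> \<and> (\<forall>x\<in>#\<alpha>. x \<le> m)}. add_mset m (a - {#m#}) = a"
    by auto
  show "\<forall>a\<in>{\<gamma>. (\<forall>x\<in>#\<gamma>. 0 < x \<and> x \<le> m) \<and> sum_mset \<gamma> + m = k}. add_mset m a - {#m#} = a"
    by auto
  show "(\<lambda>\<alpha>. \<alpha> - {#m#}) ` {\<alpha>\<in>partitions k. m \<in># \<alpha> \<and> (\<forall>x\<in>#\<alpha>. x \<le> m)} \<subseteq> {\<gamma>. (\<forall>x\<in>#\<gamma>. 0 < x \<and> x \<le> m) \<and> sum_mset \<gamma> + m = k}"
  proof
    fix \<gamma> assume "\<gamma> \<in> (\<lambda>\<alpha>. \<alpha> - {#m#}) ` {\<alpha>\<in>partitions k. m \<in># \<alpha> \<and> (\<forall>x\<in>#\<alpha>. x \<le> m)}"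
    then obtain \<alpha> where a: "\<alpha> \<in> partitions k" "m \<in># \<alpha>" "\<forall>x\<in>#\<alpha>. x \<le> m" "\<gamma> = \<alpha> - {#m#}" by auto
    have dec: "\<alpha> = add_mset m \<gamma>" using a by auto
    have "\<forall>x\<in>#\<gamma>. 0 < x \<and> x \<le> m" using a partitions_pos[OF a(1)] by (meson in_diffD)
    moreover have "sum_mset \<gamma> + m = k" using a(1) dec by (auto simp: partitions_def)
    ultimately show "\<gamma> \<in> {\<gamma>. (\<forall>x\<in>#\<gamma>. 0 < x \<and> x \<le> m) \<and> sum_mset \<gamma> + m = k}" by simp
  qed
  show "add_mset m ` {\<gamma>. (\<forall>x\<in>#\<gamma>. 0 < x \<and> x \<le> m) \<and> sum_mset \<gamma> + m = k} \<subseteq> {\<alpha>\<in>partitions k. m \<in># \<alpha> \<and> (\<forall>x\<in>#\<alpha>. x \<le> m)}"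
    using that by (auto simp: partitions_def)
qed

definition Q3 :: "nat \<Rightarrow> nat \<Rightarrow> (nat set \<times> nat multiset) set" where
  "Q3 n m = (SIGMA U:W n. G n m U)"

lemma finite_Q3: "finite (Q3 n m)"
  unfolding Q3_def by (rule finite_SigmaI) (auto simp: finite_W finite_G)

lemma b6:
  assumes "0 < m"
  shows "(\<Sum>U\<in>W n. (-1) ^ card U * int (card {\<beta>\<in>partitions (n - \<Sum>U). size \<beta> = m}))
       = (\<Sum>(U,\<gamma>)\<in>Q3 n m. (-1::int) ^ card U)"
proof -
  have "(\<Sum>U\<in>W n. (-1) ^ card U * int (card {\<beta>\<in>partitions (n - \<Sum>U). size \<beta> = m}))
      = (\<Sum>U\<in>W n. \<Sum>\<gamma>\<in>G n m U. (-1::int) ^ card U)"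
    using assms by (simp add: b5 card_G G_def mult.commute)
  also have "\<dots> = (\<Sum>(U,\<gamma>)\<in>Q3 n m. (-1::int) ^ card U)"
    unfolding Q3_def by (rule sum.Sigma) (auto simp: finite_W finite_G)
  finally show ?thesis .
qed

lemma cancel_sum:
  assumes "finite A" "bij_betw t A B" "\<And>x. x \<in> A \<Longrightarrow> g (t x) = - g x" "A \<inter> B = {}"
  shows "sum g (A \<union> B) = (0::int)"
proof -
  have fB: "finite B" using assms(1,2) bij_betw_finite by blast
  have "sum g (A \<union> B) = sum g A + sum g B"
    by (rule sum.union_disjoint[OF assms(1) fB assms(4)])
  also have "sum g B = sum (\<lambda>x. g (t x)) A"
    using sum.reindex_bij_betw[OF assms(2), of g] by simp
  also have "\<dots> = - sum g A" using assms(3) by (simp add: sum_negf)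
  finally show ?thesis by simp
qed

definition K :: "nat \<Rightarrow> nat set \<times> nat multiset \<Rightarrow> nat set" where
  "K m x = {u\<in>fst x. u \<le> m} \<union> set_mset (snd x)"

definition tog :: "nat \<Rightarrow> nat set \<times> nat multiset \<Rightarrow> nat set \<times> nat multiset" where
  "tog m x = (fst x - {Min (K m x)}, add_mset (Min (K m x)) (snd x))"

definition tog' :: "nat \<Rightarrow> nat set \<times> nat multiset \<Rightarrow> nat set \<times> nat multiset" where
  "tog' m x = (insert (Min (K m x)) (fst x), snd x - {#Min (K m x)#})"

lemma Q3_iff: "(U,\<gamma>) \<in> Q3 n m \<longleftrightarrow> U \<subseteq> {1..n} \<and> \<Sum>U \<le> n \<and> (\<forall>x\<in>#\<gamma>. 0 < x \<and> x \<le> m) \<and> sum_mset \<gamma> + m = n - \<Sum>U"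
  by (auto simp: Q3_def W_def G_def)

lemma finite_K: "x \<in> Q3 n m \<Longrightarrow> finite (K m x)"
proof -
  assume "x \<in> Q3 n m"
  then have "fst x \<subseteq> {1..n}" by (cases x) (simp add: Q3_iff)
  then have "finite (fst x)" using finite_subset by blast
  then show ?thesis by (simp add: K_def)
qed

definition QA where "QA n m = {x\<in>Q3 n m. K m x \<noteq> {} \<and> Min (K m x) \<in> fst x}"
definition QB where "QB n m = {x\<in>Q3 n m. K m x \<noteq> {} \<and> Min (K m x) \<notin> fst x}"
definition QC where "QC n m = {x\<in>Q3 n m. K m x = {}}"

lemma tog_props:
  assumes x: "x \<in> QA n m"
  shows "tog m x \<in> QB n m" "K m (tog m x) = K m x" "tog' m (tog m x) = x"
        "(-1::int) ^ card (fst (tog m x)) = - ((-1) ^ card (fst x))"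
proof -
  obtain U \<gamma> where xe: "x = (U,\<gamma>)" by (cases x)
  have q: "(U,\<gamma>) \<in> Q3 n m" and ne: "K m x \<noteq> {}" and mU: "Min (K m x) \<in> U"
    using x xe by (auto simp: QA_def)
  define a where "a = Min (K m x)"
  have fK: "finite (K m x)" using finite_K q xe by simp
  have aK: "a \<in> K m x" using Min_in[OF fK ne] by (simp add: a_def)
  have qi: "U \<subseteq> {1..n}" "\<Sum>U \<le> n" "\<forall>y\<in>#\<gamma>. 0 < y \<and> y \<le> m" "sum_mset \<gamma> + m = n - \<Sum>U"
    using q by (auto simp: Q3_iff)
  have am: "a \<le> m" using aK qi(3) by (auto simp: K_def xe)
  have aU: "a \<in> U" using mU a_def by simp
  have fU: "finite U" using qi(1) finite_subset by blast
  have apos: "0 < a" using aU qi(1) by auto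
  have txe: "tog m x = (U - {a}, add_mset a \<gamma>)" by (simp add: tog_def xe a_def)
  have KK0: "K m (U - {a}, add_mset a \<gamma>) = K m (U, \<gamma>)"
    using aU am by (auto simp: K_def)
  show KK: "K m (tog m x) = K m x"
    unfolding txe using KK0 xe by simp
  have sU: "\<Sum>U = a + \<Sum>(U - {a})" using fU aU by (rule sum.remove)
  have c1: "U - {a} \<subseteq> {1..n}" using qi(1) by blast
  have c2: "\<Sum>(U - {a}) \<le> n" using sU qi(2) by linarith
  have c3: "\<forall>y\<in>#add_mset a \<gamma>. 0 < y \<and> y \<le> m" using qi(3) apos am by simp
  have sga: "sum_mset (add_mset a \<gamma>) = a + sum_mset \<gamma>" by simp
  have c4: "sum_mset (add_mset a \<gamma>) + m = n - \<Sum>(U - {a})"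
    using qi(2,4) sU sga by linarith
  have "(U - {a}, add_mset a \<gamma>) \<in> Q3 n m"
    unfolding Q3_iff using c1 c2 c3 c4 by blast
  then have "tog m x \<in> Q3 n m" by (simp only: txe)
  moreover have "Min (K m (tog m x)) \<notin> fst (tog m x)"
  proof -
    have "Min (K m (tog m x)) = a" unfolding KK a_def ..
    then show ?thesis by (simp add: txe)
  qed
  moreover have "K m (tog m x) \<noteq> {}" unfolding KK by (rule ne)
  ultimately show "tog m x \<in> QB n m" by (simp add: QB_def)
  have "tog' m (tog m x) = (insert a (fst (tog m x)), snd (tog m x) - {#a#})"
    unfolding tog'_def KK a_def ..
  also have "\<dots> = (insert a (U - {a}), add_mset a \<gamma> - {#a#})" unfolding txe by simp
  also have "\<dots> = x" using aU xe by (simp add: insert_absorb)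
  finally show "tog' m (tog m x) = x" .
  have cU: "card U = Suc (card (U - {a}))" using card_Suc_Diff1[OF fU aU] by simp
  have ft: "fst (tog m x) = U - {a}" using txe by simp
  show "(-1::int) ^ card (fst (tog m x)) = - ((-1) ^ card (fst x))"
    unfolding ft using cU xe by simp
qed

lemma tog'_props:
  assumes x: "x \<in> QB n m"
  shows "tog' m x \<in> QA n m" "tog m (tog' m x) = x"
proof -
  obtain U \<gamma> where xe: "x = (U,\<gamma>)" by (cases x)
  have q: "(U,\<gamma>) \<in> Q3 n m" and ne: "K m x \<noteq> {}" and mU: "Min (K m x) \<notin> U"
    using x xe by (auto simp: QB_def)
  define a where "a = Min (K m x)"
  have fK: "finite (K m x)" using finite_K q xe by simp
  have aK: "a \<in> K m x" using Min_in[OF fK ne] by (simp add: a_def)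
  have aU: "a \<notin> U" using mU a_def by simp
  have ag: "a \<in># \<gamma>" using aK aU by (auto simp: K_def xe)
  have qi: "U \<subseteq> {1..n}" "\<Sum>U \<le> n" "\<forall>y\<in>#\<gamma>. 0 < y \<and> y \<le> m" "sum_mset \<gamma> + m = n - \<Sum>U"
    using q by (auto simp: Q3_iff)
  have am: "a \<le> m" "0 < a" using ag qi(3) by auto
  have fU: "finite U" using qi(1) finite_subset by blast
  have txe: "tog' m x = (insert a U, \<gamma> - {#a#})" by (simp add: tog'_def xe a_def)
  have gd: "\<gamma> = add_mset a (\<gamma> - {#a#})" using ag by simp
  have sg0: "set_mset \<gamma> = insert a (set_mset (\<gamma> - {#a#}))"
    using arg_cong[OF gd, of set_mset] by (simp only: set_mset_add_mset_insert)
  have K1: "K m (U, \<gamma>) = {u\<in>U. u \<le> m} \<union> insert a (set_mset (\<gamma> - {#a#}))"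
    unfolding K_def fst_conv snd_conv by (subst sg0) (rule refl)
  have K2: "K m (insert a U, \<gamma> - {#a#}) = {u\<in>insert a U. u \<le> m} \<union> set_mset (\<gamma> - {#a#})"
    unfolding K_def fst_conv snd_conv by (rule refl)
  have KK0: "K m (insert a U, \<gamma> - {#a#}) = K m (U, \<gamma>)"
    unfolding K1 K2 using am(1) by blast
  have KK: "K m (tog' m x) = K m x"
    unfolding txe using KK0 xe by simp
  have sg: "sum_mset \<gamma> = a + sum_mset (\<gamma> - {#a#})"
  proof -
    have "sum_mset (add_mset a (\<gamma> - {#a#})) = a + sum_mset (\<gamma> - {#a#})" by simp
    with arg_cong[OF gd, of sum_mset] show ?thesis by (rule trans)
  qed
  have sU: "\<Sum>(insert a U) = a + \<Sum>U" using fU aU by (rule sum.insert)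
  have an: "a \<le> n" using qi(2,4) sg am by linarith
  have pos': "\<forall>y\<in>#\<gamma> - {#a#}. 0 < y \<and> y \<le> m" using qi(3) by (meson in_diffD)
  have c1: "insert a U \<subseteq> {1..n}" using qi(1) am an by auto
  have c2: "\<Sum>(insert a U) \<le> n" using sU qi(2,4) sg by linarith
  have c4: "sum_mset (\<gamma> - {#a#}) + m = n - \<Sum>(insert a U)"
    using qi(2,4) sU sg by linarith
  have "(insert a U, \<gamma> - {#a#}) \<in> Q3 n m"
    unfolding Q3_iff using c1 c2 pos' c4 by blast
  then have "tog' m x \<in> Q3 n m" by (simp only: txe)
  moreover have "Min (K m (tog' m x)) \<in> fst (tog' m x)"
  proof -
    have "Min (K m (tog' m x)) = a" unfolding KK a_def ..
    then show ?thesis by (simp add: txe)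
  qed
  moreover have "K m (tog' m x) \<noteq> {}" unfolding KK by (rule ne)
  ultimately show "tog' m x \<in> QA n m" by (simp add: QA_def)
  have "tog m (tog' m x) = (fst (tog' m x) - {a}, add_mset a (snd (tog' m x)))"
    unfolding tog_def KK a_def ..
  also have "\<dots> = (insert a U - {a}, add_mset a (\<gamma> - {#a#}))" unfolding txe by simp
  also have "\<dots> = x" using aU xe gd[symmetric] by simp
  finally show "tog m (tog' m x) = x" .
qed

lemma b7:
  "(\<Sum>(U,\<gamma>)\<in>Q3 n m. (-1::int) ^ card U) = (\<Sum>x\<in>QC n m. (-1::int) ^ card (fst x))"
proof -
  have split: "Q3 n m = QC n m \<union> (QA n m \<union> QB n m)"
    by (auto simp: QA_def QB_def QC_def)
  have fin: "finite (QC n m)" "finite (QA n m \<union> QB n m)"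
    using finite_Q3[of n m] unfolding split by simp_all
  have disj: "QC n m \<inter> (QA n m \<union> QB n m) = {}"
    by (auto simp: QA_def QB_def QC_def)
  have bij: "bij_betw (tog m) (QA n m) (QB n m)"
  proof (rule bij_betw_byWitness[where f' = "tog' m"])
    show "\<forall>a\<in>QA n m. tog' m (tog m a) = a" using tog_props(3) by blast
    show "\<forall>a\<in>QB n m. tog m (tog' m a) = a" using tog'_props(2) by blast
    show "tog m ` QA n m \<subseteq> QB n m" using tog_props(1) by blast
    show "tog' m ` QB n m \<subseteq> QA n m" using tog'_props(1) by blast
  qed
  have fA: "finite (QA n m)" using fin(2) by simp
  have dAB: "QA n m \<inter> QB n m = {}" by (auto simp: QA_def QB_def)
  have z: "(\<Sum>x\<in>QA n m \<union> QB n m. (-1::int) ^ card (fst x)) = 0"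
    by (rule cancel_sum[OF fA bij _ dAB]) (rule tog_props(4))
  have "(\<Sum>(U,\<gamma>)\<in>Q3 n m. (-1::int) ^ card U) = (\<Sum>x\<in>Q3 n m. (-1::int) ^ card (fst x))"
    by (simp add: case_prod_beta)
  also have "\<dots> = (\<Sum>x\<in>QC n m. (-1::int) ^ card (fst x)) + (\<Sum>x\<in>QA n m \<union> QB n m. (-1::int) ^ card (fst x))"
    unfolding split by (rule sum.union_disjoint[OF fin disj])
  finally show ?thesis using z by simp
qed



definition sa :: "nat \<Rightarrow> nat \<Rightarrow> int" where
  "sa n m = (\<Sum>E\<in>distinct_partitions n. if smallest_part E = m then (-1) ^ (num_parts E - 1) else 0)"

lemma mset_set_set_mset_distinct:
  assumes "\<forall>x. count E x \<le> 1"
  shows "mset_set (set_mset E) = E"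
proof (rule multiset_eqI)
  fix x
  show "count (mset_set (set_mset E)) x = count E x"
  proof (cases "x \<in># E")
    case True
    then have "count E x = 1" using assms by (metis count_eq_zero_iff le_antisym less_one not_le)
    then show ?thesis using True by simp
  next
    case False
    then show ?thesis by (metis count_eq_zero_iff count_mset_set(3) finite_set_mset)
  qed
qed

lemma b8:
  assumes "0 < n" "0 < m"
  shows "(\<Sum>x\<in>QC n m. (-1::int) ^ card (fst x)) = sa n m"
proof -
  let ?DM = "{E\<in>distinct_partitions n. smallest_part E = m}"
  have fD: "finite (distinct_partitions n)"
    by (rule finite_subset[OF _ finite_partitions[of n]]) (auto simp: distinct_partitions_def)
  have "sa n m = (\<Sum>E\<in>?DM. (-1) ^ (num_parts E - 1))"
    unfolding sa_def by (rule sum.inter_filter[symmetric, OF fD])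
  also have "(\<Sum>x\<in>QC n m. (-1::int) ^ card (fst x)) = (\<Sum>E\<in>?DM. (-1) ^ (num_parts E - 1))"
  proof (rule sum.reindex_bij_witness[where j = "\<lambda>x. mset_set (insert m (fst x))" and i = "\<lambda>E. (set_mset E - {m}, {#})"])
    fix x assume x: "x \<in> QC n m"
    obtain U \<gamma> where xe: "x = (U,\<gamma>)" by (cases x)
    have q: "U \<subseteq> {1..n}" "\<Sum>U \<le> n" "sum_mset \<gamma> + m = n - \<Sum>U" and Ke: "K m x = {}"
      using x xe by (auto simp: QC_def Q3_iff)
    have ge: "\<gamma> = {#}" using Ke xe by (auto simp: K_def)
    have Um: "\<forall>u\<in>U. m < u" using Ke xe by (auto simp: K_def not_le)
    have fU: "finite U" using q(1) finite_subset by blast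
    have mU: "m \<notin> U" using Um by auto
    show "(set_mset (mset_set (insert m (fst x))) - {m}, {#}) = x"
      using fU mU xe ge by simp
    have sum: "\<Sum>(insert m U) = n" using fU mU q(2,3) ge by simp
    have "mset_set (insert m U) \<in> partitions n"
      unfolding partitions_def using fU q(1) assms(2) sum by (auto simp: sum_mset_mset_set_nat)
    moreover have "\<forall>y. count (mset_set (insert m U)) y \<le> 1"
      using fU by (simp add: count_mset_set')
    moreover have "smallest_part (mset_set (insert m U)) = m"
      unfolding smallest_part_def
    proof (subst finite_set_mset_mset_set)
      show "finite (insert m U)" using fU by simp
      show "Min (insert m U) = m"
        by (rule Min_eqI) (use fU Um in \<open>auto simp: less_imp_le\<close>)
    qed
    ultimately show "mset_set (insert m (fst x)) \<in> ?DM"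
      using xe by (simp add: distinct_partitions_def)
    show "(-1) ^ (num_parts (mset_set (insert m (fst x))) - 1) = (-1::int) ^ card (fst x)"
      using fU mU xe by (simp add: num_parts_def)
  next
    fix E assume E: "E \<in> ?DM"
    have Ep: "E \<in> partitions n" and Ed: "\<forall>x. count E x \<le> 1" and Es: "Min (set_mset E) = m"
      using E by (auto simp: distinct_partitions_def smallest_part_def)
    have ne: "E \<noteq> {#}" using partitions_ne[OF assms(1) Ep] .
    have mE: "m \<in># E" using Es ne by (metis Min_in finite_set_mset set_mset_eq_empty_iff)
    have EE: "mset_set (set_mset E) = E" by (rule mset_set_set_mset_distinct[OF Ed])
    show "mset_set (insert m (fst (set_mset E - {m}, {#}))) = E"
      using mE EE by (simp add: insert_absorb)
    let ?U = "set_mset E - {m}"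
    have fU: "finite ?U" by simp
    have sE: "sum_mset E = \<Sum>(set_mset E)" using EE sum_mset_mset_set_nat[of "set_mset E"] by simp
    have sE2: "\<Sum>(set_mset E) = m + \<Sum>?U" using mE by (simp add: sum.remove)
    have sn: "sum_mset E = n" using Ep by (simp add: partitions_def)
    have U1: "?U \<subseteq> {1..n}"
    proof
      fix u assume "u \<in> ?U"
      then have "u \<in># E" by simp
      then show "u \<in> {1..n}" using partitions_pos[OF Ep] le_sum_mset_nat[of u E] sn by (auto simp: Suc_le_eq)
    qed
    have Ugt: "\<forall>u\<in>?U. m < u"
    proof
      fix u assume u: "u \<in> ?U"
      then have "m \<le> u" using Es Min_le[of "set_mset E" u] by simp
      then show "m < u" using u by auto
    qed
    have "K m (?U, {#}) = {}" unfolding K_def using Ugt by (auto simp: not_le[symmetric])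
    moreover have "(?U, {#}) \<in> Q3 n m"
      unfolding Q3_iff using U1 sE sE2 sn by auto
    ultimately show "(set_mset E - {m}, {#}) \<in> QC n m" by (simp add: QC_def)
  qed
  finally show ?thesis by simp
qed

lemma core:
  assumes "0 < n" "0 < m"
  shows "sa n m = sb n m"
proof -
  have "sb n m = (\<Sum>(U,\<gamma>)\<in>Q3 n m. (-1::int) ^ card U)"
    using b1[OF assms(1)] b2 b3 b4 b6[OF assms(2)] by simp
  also have "\<dots> = sa n m" using b7 b8[OF assms] by simp
  finally show ?thesis by simp
qed



definition sA :: "nat \<Rightarrow> nat \<Rightarrow> int" where
  "sA n m = (\<Sum>E\<in>distinct_partitions n. if m \<le> smallest_part E then (-1) ^ (num_parts E - 1) else 0)"

definition sB :: "nat \<Rightarrow> nat \<Rightarrow> int" where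
  "sB n m = (\<Sum>\<pi>\<in>partitions n. if m \<le> largest_part \<pi> then
      (-1) ^ (largest_part \<pi> - m) * int ((num_distinct_parts \<pi> - 1) choose (largest_part \<pi> - m)) else 0)"

lemma finite_distinct_partitions: "finite (distinct_partitions n)"
  by (rule finite_subset[OF _ finite_partitions[of n]]) (auto simp: distinct_partitions_def)

lemma smallest_le:
  assumes "0 < n" "E \<in> partitions n"
  shows "smallest_part E \<le> n" "0 < smallest_part E"
proof -
  have ne: "E \<noteq> {#}" using partitions_ne[OF assms] .
  have "smallest_part E \<in># E" unfolding smallest_part_def using ne
    by (metis Min_in finite_set_mset set_mset_eq_empty_iff)
  then show "smallest_part E \<le> n" "0 < smallest_part E"
    using le_sum_mset_nat partitions_pos[OF assms(2)] assms(2) by (auto simp: partitions_def)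
qed

lemma largest_props:
  assumes "0 < n" "\<pi> \<in> partitions n"
  shows "largest_part \<pi> \<le> n" "1 \<le> num_distinct_parts \<pi>" "num_distinct_parts \<pi> \<le> largest_part \<pi>"
proof -
  have ne: "\<pi> \<noteq> {#}" using partitions_ne[OF assms] .
  have mem: "largest_part \<pi> \<in># \<pi>" unfolding largest_part_def using ne
    by (metis Max_in finite_set_mset set_mset_eq_empty_iff)
  then show "largest_part \<pi> \<le> n"
    using le_sum_mset_nat assms(2) by (auto simp: partitions_def)
  show "1 \<le> num_distinct_parts \<pi>" unfolding num_distinct_parts_def using ne
    by (simp add: Suc_le_eq card_gt_0_iff)
  have "set_mset \<pi> \<subseteq> {1..largest_part \<pi>}"
    using partitions_pos[OF assms(2)] by (auto simp: largest_part_def Suc_le_eq)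
  then show "num_distinct_parts \<pi> \<le> largest_part \<pi>"
    unfolding num_distinct_parts_def using card_mono[of "{1..largest_part \<pi>}" "set_mset \<pi>"] by simp
qed

lemma sA_step: "sA n m = sA n (Suc m) + sa n m"
  unfolding sA_def sa_def sum.distrib[symmetric]
  by (rule sum.cong) auto

lemma sB_step:
  assumes "0 < n"
  shows "sB n m = sB n (Suc m) + sb n m"
  unfolding sB_def sb_def sum.distrib[symmetric]
proof (rule sum.cong[OF refl])
  fix \<pi> assume p: "\<pi> \<in> partitions n"
  obtain L where L_def: "largest_part \<pi> = L" by blast
  obtain v where v_def: "num_distinct_parts \<pi> = v" by blast
  have v1: "1 \<le> v" using largest_props[OF assms p] by (simp add: v_def)
  then obtain v' where vv: "v = Suc v'" by (cases v) auto
  show "(if m \<le> largest_part \<pi> then (-1) ^ (largest_part \<pi> - m) * int ((num_distinct_parts \<pi> - 1) choose (largest_part \<pi> - m)) else 0) =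
        (if Suc m \<le> largest_part \<pi> then (-1) ^ (largest_part \<pi> - Suc m) * int ((num_distinct_parts \<pi> - 1) choose (largest_part \<pi> - Suc m)) else 0) +
        (if m \<le> largest_part \<pi> then (-1) ^ (largest_part \<pi> - m) * int (num_distinct_parts \<pi> choose (largest_part \<pi> - m)) else (0::int))"
  proof (cases "m \<le> L")
    case False then show ?thesis using L_def by simp
  next
    case True
    show ?thesis
    proof (cases "L = m")
      case True then show ?thesis using L_def by simp
    next
      case False
      then obtain d where d: "L - m = Suc d" "L - Suc m = d" using \<open>m \<le> L\<close>
        by (metis Suc_diff_Suc diff_Suc_Suc le_neq_implies_less)
      have "int (v choose Suc d) = int (v' choose d) + int (v' choose Suc d)" using vv by simp
      then show ?thesis using \<open>m \<le> L\<close> False d vv L_def v_def by (simp add: algebra_simps)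
    qed
  qed
qed

lemma sA_big: "0 < n \<Longrightarrow> n < m \<Longrightarrow> sA n m = 0"
  unfolding sA_def using smallest_le
  by (intro sum.neutral) (auto simp: distinct_partitions_def dest!: smallest_le(1)[of n] intro: le_trans)

lemma sB_big: "0 < n \<Longrightarrow> n < m \<Longrightarrow> sB n m = 0"
  unfolding sB_def
proof (intro sum.neutral ballI)
  fix \<pi> assume "0 < n" "n < m" "\<pi> \<in> partitions n"
  then have "\<not> m \<le> largest_part \<pi>" using largest_props(1)[of n \<pi>] by linarith
  then show "(if m \<le> largest_part \<pi> then (-1) ^ (largest_part \<pi> - m) * int ((num_distinct_parts \<pi> - 1) choose (largest_part \<pi> - m)) else 0) = 0"
    by simp
qed

lemma sA_sB: assumes "0 < n" "0 < m" shows "sA n m = sB n m"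
proof (cases "m \<le> Suc n")
  case False then show ?thesis using sA_big sB_big assms by simp
next
  case True
  show ?thesis using True assms(2)
  proof (induction m rule: inc_induct)
    case base then show ?case using sA_big sB_big assms by simp
  next
    case (step k)
    then show ?case using sA_step[of n k] sB_step[OF assms(1), of k] core[OF assms(1), of k] by simp
  qed
qed



lemma lhs_eq:
  fixes f :: "nat \<Rightarrow> complex"
  assumes "0 < n"
  shows "(\<Sum>E\<in>distinct_partitions n. (-1) ^ (num_parts E - 1) * (\<Sum>j=1..smallest_part E. f j))
       = (\<Sum>m=1..n. f m * of_int (sA n m))"
proof -
  have "(\<Sum>E\<in>distinct_partitions n. (-1) ^ (num_parts E - 1) * (\<Sum>j=1..smallest_part E. f j))
      = (\<Sum>E\<in>distinct_partitions n. \<Sum>m=1..n. if m \<le> smallest_part E then (-1) ^ (num_parts E - 1) * f m else 0)"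
  proof (rule sum.cong[OF refl])
    fix E assume E: "E \<in> distinct_partitions n"
    then have sn: "smallest_part E \<le> n" using smallest_le(1)[OF assms] by (auto simp: distinct_partitions_def)
    have "(\<Sum>m=1..n. if m \<le> smallest_part E then (-1) ^ (num_parts E - 1) * f m else 0)
        = (\<Sum>m\<in>{m\<in>{1..n}. m \<le> smallest_part E}. (-1) ^ (num_parts E - 1) * f m)"
      by (rule sum.inter_filter[symmetric]) simp
    also have "{m\<in>{1..n}. m \<le> smallest_part E} = {1..smallest_part E}" using sn by auto
    finally show "(-1) ^ (num_parts E - 1) * (\<Sum>j=1..smallest_part E. f j) =
        (\<Sum>m=1..n. if m \<le> smallest_part E then (-1) ^ (num_parts E - 1) * f m else 0)"
      by (simp add: sum_distrib_left)
  qed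
  also have "\<dots> = (\<Sum>m=1..n. \<Sum>E\<in>distinct_partitions n. if m \<le> smallest_part E then (-1) ^ (num_parts E - 1) * f m else 0)"
    by (rule sum.swap)
  also have "\<dots> = (\<Sum>m=1..n. f m * of_int (sA n m))"
  proof (rule sum.cong[OF refl])
    fix m
    show "(\<Sum>E\<in>distinct_partitions n. if m \<le> smallest_part E then (-1) ^ (num_parts E - 1) * f m else 0) = f m * of_int (sA n m)"
      unfolding sA_def of_int_sum sum_distrib_left
      by (rule sum.cong) (auto simp: mult.commute)
  qed
  finally show ?thesis .
qed

lemma rhs_term:
  fixes f :: "nat \<Rightarrow> complex"
  assumes "0 < n" "\<pi> \<in> partitions n"
  shows "(\<Sum>j=0..num_distinct_parts \<pi> - 1. (-1) ^ j * of_nat ((num_distinct_parts \<pi> - 1) choose j) * f (largest_part \<pi> - j))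
      = (\<Sum>m=1..n. if m \<le> largest_part \<pi> then (-1) ^ (largest_part \<pi> - m) * of_nat ((num_distinct_parts \<pi> - 1) choose (largest_part \<pi> - m)) * f m else 0)"
proof -
  obtain L where L: "largest_part \<pi> = L" by blast
  obtain v where v: "num_distinct_parts \<pi> = v" by blast
  have Ln: "L \<le> n" and v1: "1 \<le> v" and vL: "v \<le> L" using largest_props[OF assms] L v by auto
  have "(\<Sum>m=1..n. if m \<le> L then (-1) ^ (L - m) * of_nat ((v - 1) choose (L - m)) * f m else 0)
      = (\<Sum>m\<in>{m\<in>{1..n}. m \<le> L}. (-1) ^ (L - m) * of_nat ((v - 1) choose (L - m)) * f m)"
    by (rule sum.inter_filter[symmetric]) simp
  also have "{m\<in>{1..n}. m \<le> L} = {1..L}" using Ln by auto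
  also have "(\<Sum>m\<in>{1..L}. (-1) ^ (L - m) * of_nat ((v - 1) choose (L - m)) * f m)
      = (\<Sum>j\<in>{0..L-1}. (-1) ^ j * of_nat ((v - 1) choose j) * (f (L - j) :: complex))"
  proof (rule sum.reindex_bij_witness[where i = "\<lambda>j. L - j" and j = "\<lambda>m. L - m"])
    fix m assume "m \<in> {1..L}" then show "L - (L - m) = m" "L - m \<in> {0..L-1}" by auto
  next
    fix j assume "j \<in> {0..L-1}" then show "L - (L - j) = j" "L - j \<in> {1..L}" using v1 vL by auto
  next
    fix m assume "m \<in> {1..L}" then show "(-1) ^ (L - m) * of_nat ((v - 1) choose (L - m)) * f (L - (L - m)) = (-1) ^ (L - m) * of_nat ((v - 1) choose (L - m)) * f m"
      by auto
  qed
  also have "\<dots> = (\<Sum>j\<in>{0..v-1}. (-1) ^ j * of_nat ((v - 1) choose j) * f (L - j))"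
  proof (rule sum.mono_neutral_right)
    show "{0..v-1} \<subseteq> {0..L-1}" using vL by auto
    show "\<forall>j\<in>{0..L - 1} - {0..v - 1}. (-1) ^ j * of_nat ((v - 1) choose j) * f (L - j) = 0" by auto
  qed simp
  finally show ?thesis by (simp only: L v)
qed

lemma rhs_eq:
  fixes f :: "nat \<Rightarrow> complex"
  assumes "0 < n"
  shows "(\<Sum>\<pi>\<in>partitions n. \<Sum>j=0..num_distinct_parts \<pi> - 1. (-1) ^ j * of_nat ((num_distinct_parts \<pi> - 1) choose j) * f (largest_part \<pi> - j))
       = (\<Sum>m=1..n. f m * of_int (sB n m))"
proof -
  have "(\<Sum>\<pi>\<in>partitions n. \<Sum>j=0..num_distinct_parts \<pi> - 1. (-1) ^ j * of_nat ((num_distinct_parts \<pi> - 1) choose j) * f (largest_part \<pi> - j))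
      = (\<Sum>\<pi>\<in>partitions n. \<Sum>m=1..n. if m \<le> largest_part \<pi> then (-1) ^ (largest_part \<pi> - m) * of_nat ((num_distinct_parts \<pi> - 1) choose (largest_part \<pi> - m)) * f m else 0)"
    by (rule sum.cong[OF refl]) (rule rhs_term[OF assms])
  also have "\<dots> = (\<Sum>m=1..n. \<Sum>\<pi>\<in>partitions n. if m \<le> largest_part \<pi> then (-1) ^ (largest_part \<pi> - m) * of_nat ((num_distinct_parts \<pi> - 1) choose (largest_part \<pi> - m)) * f m else 0)"
    by (rule sum.swap)
  also have "\<dots> = (\<Sum>m=1..n. f m * of_int (sB n m))"
  proof (rule sum.cong[OF refl])
    fix m
    show "(\<Sum>\<pi>\<in>partitions n. if m \<le> largest_part \<pi> then (-1) ^ (largest_part \<pi> - m) * of_nat ((num_distinct_parts \<pi> - 1) choose (largest_part \<pi> - m)) * f m else 0) = f m * of_int (sB n m)"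
      unfolding sB_def of_int_sum sum_distrib_left
      by (rule sum.cong) (auto simp: mult.commute mult.left_commute)
  qed
  finally show ?thesis .
qed

lemma div_part:
  fixes f :: "nat \<Rightarrow> complex"
  assumes "0 < n"
  shows "(\<Sum>\<pi>\<in>{\<pi>\<in>partitions n. \<not> 2 \<le> num_distinct_parts \<pi>}. \<Sum>j=0..num_distinct_parts \<pi> - 1. (-1) ^ j * of_nat ((num_distinct_parts \<pi> - 1) choose j) * f (largest_part \<pi> - j))
       = (\<Sum>d | d dvd n. f d)"
proof (rule sum.reindex_bij_witness[where j = "\<lambda>\<pi>. largest_part \<pi>" and i = "\<lambda>d. replicate_mset (n div d) d"])
  fix \<pi> assume p: "\<pi> \<in> {\<pi>\<in>partitions n. \<not> 2 \<le> num_distinct_parts \<pi>}"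
  then have pp: "\<pi> \<in> partitions n" and nd: "\<not> 2 \<le> num_distinct_parts \<pi>" by auto
  have "1 \<le> num_distinct_parts \<pi>" using largest_props[OF assms pp] by simp
  then have c1: "card (set_mset \<pi>) = 1" using nd by (simp add: num_distinct_parts_def)
  then obtain x where sx: "set_mset \<pi> = {x}" by (rule card_1_singletonE)
  have Lx: "largest_part \<pi> = x" using sx by (simp add: largest_part_def)
  have x0: "0 < x" using sx partitions_pos[OF pp, of x] by simp
  have rep: "\<pi> = replicate_mset (count \<pi> x) x"
  proof (rule multiset_eqI)
    fix y show "count \<pi> y = count (replicate_mset (count \<pi> x) x) y"
      using sx by (cases "y = x") (auto simp: count_eq_zero_iff)
  qed
  have "sum_mset \<pi> = count \<pi> x * x" by (subst rep) simp
  then have sn: "count \<pi> x * x = n" using pp by (simp add: partitions_def)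
  then have "n div x = count \<pi> x" using div_mult_self_is_m[OF x0, of "count \<pi> x"] by simp
  then show "replicate_mset (n div largest_part \<pi>) (largest_part \<pi>) = \<pi>" using rep Lx by simp
  show "largest_part \<pi> \<in> {d. d dvd n}" using sn Lx by (metis dvd_triv_right mem_Collect_eq)
  show "f (largest_part \<pi>) = (\<Sum>j=0..num_distinct_parts \<pi> - 1. (-1) ^ j * of_nat ((num_distinct_parts \<pi> - 1) choose j) * f (largest_part \<pi> - j))"
    using c1 by (simp add: num_distinct_parts_def)
next
  fix d assume "d \<in> {d. d dvd n}"
  then have dn: "d dvd n" by simp
  then have d0: "0 < d" using assms by (metis dvd_0_left_iff gr0I not_less0)
  have q0: "0 < n div d" using dn assms d0 by (metis dvd_div_eq_0_iff gr0I less_numeral_extra(3))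
  show "largest_part (replicate_mset (n div d) d) = d" using q0 by (simp add: largest_part_def)
  have "replicate_mset (n div d) d \<in> partitions n"
    using q0 d0 dn by (auto simp: partitions_def)
  moreover have "num_distinct_parts (replicate_mset (n div d) d) = 1" using q0 by (simp add: num_distinct_parts_def)
  ultimately show "replicate_mset (n div d) d \<in> {\<pi>\<in>partitions n. \<not> 2 \<le> num_distinct_parts \<pi>}" by simp
qed

theorem theorem2p6:
  fixes n :: nat and k c :: complex
  assumes "0 < n"
  shows "(\<Sum>\<pi>\<in>distinct_partitions n. (-1) ^ (num_parts \<pi> - 1) *
            (\<Sum>j=1..smallest_part \<pi>. (of_nat j) powr k * c ^ j))
       = (\<Sum>\<pi>\<in>{\<pi>\<in>partitions n. 2 \<le> num_distinct_parts \<pi>}.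
            (\<Sum>j=0..num_distinct_parts \<pi> - 1.
               (-1) ^ j * of_nat ((num_distinct_parts \<pi> - 1) choose j) *
               (of_nat (largest_part \<pi> - j)) powr k * c ^ (largest_part \<pi> - j)))
         + sigma_kc k c n"
proof -
  define f :: "nat \<Rightarrow> complex" where "f j = (of_nat j) powr k * c ^ j" for j
  define T where "T \<pi> = (\<Sum>j=0..num_distinct_parts \<pi> - 1. (-1) ^ j * of_nat ((num_distinct_parts \<pi> - 1) choose j) * f (largest_part \<pi> - j))" for \<pi>
  have lhs: "(\<Sum>\<pi>\<in>distinct_partitions n. (-1) ^ (num_parts \<pi> - 1) *
            (\<Sum>j=1..smallest_part \<pi>. (of_nat j) powr k * c ^ j)) = (\<Sum>m=1..n. f m * of_int (sA n m))"
    using lhs_eq[OF assms, of f] by (simp add: f_def)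
  have "(\<Sum>\<pi>\<in>{\<pi>\<in>partitions n. 2 \<le> num_distinct_parts \<pi>}.
            (\<Sum>j=0..num_distinct_parts \<pi> - 1.
               (-1) ^ j * of_nat ((num_distinct_parts \<pi> - 1) choose j) *
               (of_nat (largest_part \<pi> - j)) powr k * c ^ (largest_part \<pi> - j)))
       = (\<Sum>\<pi>\<in>{\<pi>\<in>partitions n. 2 \<le> num_distinct_parts \<pi>}. T \<pi>)"
    by (simp add: T_def f_def mult.assoc)
  moreover have "sigma_kc k c n = (\<Sum>\<pi>\<in>{\<pi>\<in>partitions n. \<not> 2 \<le> num_distinct_parts \<pi>}. T \<pi>)"
    unfolding sigma_kc_def T_def using div_part[OF assms, of f] by (simp add: f_def)
  moreover have "(\<Sum>\<pi>\<in>{\<pi>\<in>partitions n. 2 \<le> num_distinct_parts \<pi>}. T \<pi>) + (\<Sum>\<pi>\<in>{\<pi>\<in>partitions n. \<not> 2 \<le> num_distinct_parts \<pi>}. T \<pi>)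
       = (\<Sum>\<pi>\<in>partitions n. T \<pi>)"
    by (rule sum.union_disjoint[symmetric, THEN trans]) (auto simp: finite_partitions intro!: sum.cong)
  moreover have "(\<Sum>\<pi>\<in>partitions n. T \<pi>) = (\<Sum>m=1..n. f m * of_int (sB n m))"
    unfolding T_def by (rule rhs_eq[OF assms])
  moreover have "(\<Sum>m=1..n. f m * of_int (sA n m)) = (\<Sum>m=1..n. f m * of_int (sB n m))"
    by (rule sum.cong) (auto simp: sA_sB[OF assms])
  ultimately show ?thesis using lhs by simp
qed


end
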